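(* Let $k,\ell\ge 2$ be integers, $\alpha>0$, and let $\mathcal{C}$ be a non-empty $\alpha$-rich collection of $2\ell$-cycles in a graph $G$. If $\alpha\ge k\ell$, then $G$ contains a copy of $P_{k,\ell}$.
   Context: For $\alpha>0$ and $\ell\ge 2$, a collection $\mathcal{C}$ of labelled $2\ell$-cycles $x_1x_2\cdots x_{2\ell}x_1$ (with distinct vertices) in $G$ is $\alpha$-rich if for every member $x_1\cdots x_{2\ell}x_1\in\mathcal{C}$ and every $1\le i\le 2\ell$ there exist at least $\alpha$ distinct vertices $x_i'$ such that $x_1\cdots x_{i-1}x_i'x_{i+1}\cdots x_{2\ell}x_1\in\mathcal{C}$. The quadrangulated cylinder $P_{k,\ell}$ has vertex set $\{x_{i,j}:1\le i\le k,1\le j\le\ell\}$ and edges $x_{i,j}x_{i+1,j}$ ($1\le i\le k-1$, $1\le j\le\ell$), $x_{i,j+1}x_{i+1,j}$ ($1\le i\le k-1$ odd, $1\le j\le\ell$), $x_{i,j}x_{i+1,j+1}$ ($1\le i\le k-1$ even, $1\le j\le\ell$), with $x_{i,\ell+1}=x_{i,1}$. *)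

theory Defs
  imports Complex_Main
begin

definition simple_graph :: "'a set \<Rightarrow> ('a \<Rightarrow> 'a \<Rightarrow> bool) \<Rightarrow> bool" where
  "simple_graph V E \<longleftrightarrow> finite V \<and> (\<forall>x y. E x y \<longrightarrow> E y x) \<and> (\<forall>x. \<not> E x x)
     \<and> (\<forall>x y. E x y \<longrightarrow> x \<in> V \<and> y \<in> V)"

text \<open>A labelled 2l-cycle x_1 ... x_{2l} x_1, stored as a list of length 2l (0-indexed).\<close>
definition is_cycle :: "'a set \<Rightarrow> ('a \<Rightarrow> 'a \<Rightarrow> bool) \<Rightarrow> nat \<Rightarrow> 'a list \<Rightarrow> bool" where
  "is_cycle V E l xs \<longleftrightarrow> length xs = 2 * l \<and> distinct xs \<and> set xs \<subseteq> V
     \<and> (\<forall>i < 2 * l. E (xs ! i) (xs ! ((i + 1) mod (2 * l))))"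

definition rich :: "'a set \<Rightarrow> ('a \<Rightarrow> 'a \<Rightarrow> bool) \<Rightarrow> nat \<Rightarrow> real \<Rightarrow> 'a list set \<Rightarrow> bool" where
  "rich V E l \<alpha> C \<longleftrightarrow> (\<forall>xs \<in> C. is_cycle V E l xs) \<and>
     (\<forall>xs \<in> C. \<forall>i < 2 * l. \<exists>S. finite S \<and> real (card S) \<ge> \<alpha> \<and>
         (\<forall>v \<in> S. xs[i := v] \<in> C))"

definition cyc_succ :: "nat \<Rightarrow> nat \<Rightarrow> nat" where
  "cyc_succ l j = (if j = l then 1 else j + 1)"

text \<open>G contains a copy of the quadrangulated cylinder P_{k,l}: an injective
  map of its vertices x_{i,j} into V sending edges to edges.\<close>
definition has_cylinder :: "'a set \<Rightarrow> ('a \<Rightarrow> 'a \<Rightarrow> bool) \<Rightarrow> nat \<Rightarrow> nat \<Rightarrow> bool" where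
  "has_cylinder V E k l \<longleftrightarrow> (\<exists>f :: nat \<Rightarrow> nat \<Rightarrow> 'a.
     inj_on (\<lambda>(i, j). f i j) ({1..k} \<times> {1..l}) \<and>
     (\<forall>i \<in> {1..k}. \<forall>j \<in> {1..l}. f i j \<in> V) \<and>
     (\<forall>i \<in> {1..k-1}. \<forall>j \<in> {1..l}. E (f i j) (f (i + 1) j)) \<and>
     (\<forall>i \<in> {1..k-1}. odd i \<longrightarrow> (\<forall>j \<in> {1..l}. E (f i (cyc_succ l j)) (f (i + 1) j))) \<and>
     (\<forall>i \<in> {1..k-1}. even i \<longrightarrow> (\<forall>j \<in> {1..l}. E (f i j) (f (i + 1) (cyc_succ l j)))))"

end

theory Submission
  imports Defs
begin

definition cyl :: "'a set \<Rightarrow> ('a \<Rightarrow> 'a \<Rightarrow> bool) \<Rightarrow> nat \<Rightarrow> nat \<Rightarrow> (nat \<Rightarrow> nat \<Rightarrow> 'a) \<Rightarrow> bool" where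
  "cyl V E k l f \<longleftrightarrow>
     inj_on (\<lambda>(i, j). f i j) ({1..k} \<times> {1..l}) \<and>
     (\<forall>i \<in> {1..k}. \<forall>j \<in> {1..l}. f i j \<in> V) \<and>
     (\<forall>i \<in> {1..k-1}. \<forall>j \<in> {1..l}. E (f i j) (f (i + 1) j)) \<and>
     (\<forall>i \<in> {1..k-1}. odd i \<longrightarrow> (\<forall>j \<in> {1..l}. E (f i (cyc_succ l j)) (f (i + 1) j))) \<and>
     (\<forall>i \<in> {1..k-1}. even i \<longrightarrow> (\<forall>j \<in> {1..l}. E (f i j) (f (i + 1) (cyc_succ l j))))"

lemma has_cyl_iff: "has_cylinder V E k l \<longleftrightarrow> (\<exists>f. cyl V E k l f)"
  unfolding has_cylinder_def cyl_def by simp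

definition pos :: "nat \<Rightarrow> nat \<Rightarrow> nat" where
  "pos i j = (if odd i then 2*j-2 else 2*j-1)"

lemma pos_lt: "j \<in> {1..l} \<Longrightarrow> pos i j < 2*l"
  unfolding pos_def by auto

lemma pos_inj: "j \<in> {1..l} \<Longrightarrow> j' \<in> {1..l} \<Longrightarrow> pos i j = pos i' j' \<Longrightarrow> (odd i \<longleftrightarrow> odd i') \<and> j = j'"
  unfolding pos_def by (auto split: if_splits) presburger+

lemma succ_in: "j \<in> {1..l} \<Longrightarrow> cyc_succ l j \<in> {1..l}"
  unfolding cyc_succ_def by auto

lemma cycA:
  assumes "is_cycle V E l xs" "j \<in> {1..l}"
  shows "E (xs!(2*j-2)) (xs!(2*j-1))"
proof -
  have "2*j-2 < 2*l" using assms(2) by auto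
  then have "E (xs!(2*j-2)) (xs!((2*j-2+1) mod (2*l)))" using assms(1) unfolding is_cycle_def by blast
  moreover have "(2*j-2+1) mod (2*l) = 2*j-1" using assms(2) by auto
  ultimately show ?thesis by simp
qed

lemma cycB:
  assumes "is_cycle V E l xs" "j \<in> {1..l}"
  shows "E (xs!(2*j-1)) (xs!(2*cyc_succ l j-2))"
proof -
  have "2*j-1 < 2*l" using assms(2) by auto
  then have "E (xs!(2*j-1)) (xs!((2*j-1+1) mod (2*l)))" using assms(1) unfolding is_cycle_def by blast
  moreover have "(2*j-1+1) mod (2*l) = 2*cyc_succ l j-2" using assms(2) unfolding cyc_succ_def by auto
  ultimately show ?thesis by simp
qed

lemma pair_edges:
  assumes "is_cycle V E l xs" "simple_graph V E"
    and ab: "\<forall>j\<in>{1..l}. a j = xs!pos r j \<and> b j = xs!pos (Suc r) j"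
  shows "\<forall>j\<in>{1..l}. E (a j) (b j)"
    and "odd r \<Longrightarrow> \<forall>j\<in>{1..l}. E (a (cyc_succ l j)) (b j)"
    and "even r \<Longrightarrow> \<forall>j\<in>{1..l}. E (a j) (b (cyc_succ l j))"
proof -
  have sym: "\<And>x y. E x y \<Longrightarrow> E y x" using assms(2) unfolding simple_graph_def by blast
  show "\<forall>j\<in>{1..l}. E (a j) (b j)"
  proof
    fix j assume j: "j \<in> {1..l}"
    show "E (a j) (b j)"
    proof (cases "odd r")
      case True then show ?thesis using ab j cycA[OF assms(1) j] by (simp add: pos_def)
    next
      case False then show ?thesis using ab j sym[OF cycA[OF assms(1) j]] by (simp add: pos_def)
    qed
  qed
  show "odd r \<Longrightarrow> \<forall>j\<in>{1..l}. E (a (cyc_succ l j)) (b j)"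
  proof
    fix j assume r: "odd r" and j: "j \<in> {1..l}"
    have "a (cyc_succ l j) = xs!(2*cyc_succ l j-2)" using ab succ_in[OF j] r by (simp add: pos_def)
    moreover have "b j = xs!(2*j-1)" using ab j r by (simp add: pos_def)
    ultimately show "E (a (cyc_succ l j)) (b j)" using sym[OF cycB[OF assms(1) j]] by simp
  qed
  show "even r \<Longrightarrow> \<forall>j\<in>{1..l}. E (a j) (b (cyc_succ l j))"
  proof
    fix j assume r: "even r" and j: "j \<in> {1..l}"
    have "b (cyc_succ l j) = xs!(2*cyc_succ l j-2)" using ab succ_in[OF j] r by (simp add: pos_def)
    moreover have "a j = xs!(2*j-1)" using ab j r by (simp add: pos_def)
    ultimately show "E (a j) (b (cyc_succ l j))" using cycB[OF assms(1) j] by simp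
  qed
qed

lemma replace:
  assumes rich: "rich V E l \<alpha> C" and F: "finite F" "real (card F) < \<alpha>" and P: "finite P"
  shows "xs \<in> C \<Longrightarrow> P \<subseteq> {..<2*l} \<Longrightarrow> \<exists>ys\<in>C. (\<forall>i. i \<notin> P \<longrightarrow> ys!i = xs!i) \<and> (\<forall>i\<in>P. ys!i \<notin> F)"
  using P
proof (induction P)
  case empty
  then show ?case by auto
next
  case (insert a P)
  then obtain ys' where ys': "ys' \<in> C" "\<forall>i. i \<notin> P \<longrightarrow> ys'!i = xs!i" "\<forall>i\<in>P. ys'!i \<notin> F" by auto
  have a: "a < 2*l" using insert by auto
  obtain S where S: "finite S" "real (card S) \<ge> \<alpha>" "\<forall>v\<in>S. ys'[a:=v] \<in> C"
    using rich ys'(1) a unfolding rich_def by blast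
  have "\<not> S \<subseteq> F"
  proof
    assume "S \<subseteq> F" then have "card S \<le> card F" using card_mono F(1) by blast
    then show False using S(2) F(2) by linarith
  qed
  then obtain v where v: "v \<in> S" "v \<notin> F" by blast
  have len: "length ys' = 2*l" using rich ys'(1) unfolding rich_def is_cycle_def by blast
  show ?case
    apply (rule bexI[of _ "ys'[a:=v]"])
    using ys' v a len insert.hyps by (auto simp: nth_list_update S(3))
qed

definition Inv where
  "Inv V E l C r f ys \<longleftrightarrow> ys \<in> C \<and> (\<forall>j\<in>{1..l}. f (r-1) j = ys!pos (r-1) j \<and> f r j = ys!pos r j)
     \<and> cyl V E r l f"


lemma base_inv:
  assumes g: "simple_graph V E" and rich: "rich V E l \<alpha> C" and xs: "xs \<in> C"
  shows "Inv V E l C 2 (\<lambda>i j. xs!pos i j) xs"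
proof -
  have cy: "is_cycle V E l xs" using rich xs unfolding rich_def by blast
  have len: "length xs = 2*l" and dist: "distinct xs" and sV: "set xs \<subseteq> V" using cy unfolding is_cycle_def by auto
  have inj: "inj_on (\<lambda>(i, j). xs!pos i j) ({1..2} \<times> {1..l})"
  proof (rule inj_onI, clarify)
    fix i j i' j' assume h: "i \<in> {1..2}" "j \<in> {1..l}" "i' \<in> {1..2}" "j' \<in> {1..l}" "xs!pos i j = xs!pos i' j'"
    have "pos i j = pos i' j'" using h pos_lt[of j l i] pos_lt[of j' l i'] nth_eq_iff_index_eq[OF dist] len by auto
    then have "(odd i \<longleftrightarrow> odd i') \<and> j = j'" using pos_inj h by blast
    moreover have "i = 1 \<or> i = 2" "i' = 1 \<or> i' = 2" using h(1,3) by auto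
    ultimately show "i = i' \<and> j = j'" by auto
  qed
  have V: "\<forall>i \<in> {1..2}. \<forall>j \<in> {1..l}. xs!pos i j \<in> V"
    using pos_lt len sV nth_mem by (metis subsetD)
  have ab: "\<forall>j\<in>{1..l}. (\<lambda>j. xs!pos 1 j) j = xs!pos 1 j \<and> (\<lambda>j. xs!pos 2 j) j = xs!pos (Suc 1) j" by (simp add: numeral_2_eq_2)
  note pe = pair_edges[OF cy g ab]
  have c: "cyl V E 2 l (\<lambda>i j. xs!pos i j)"
    unfolding cyl_def using inj V pe by (simp add: numeral_2_eq_2)
  show ?thesis unfolding Inv_def using c xs by simp
qed

lemma step_inv:
  assumes g: "simple_graph V E" and rich: "rich V E l \<alpha> C"
    and r: "2 \<le> r" and rl: "real (r * l) < \<alpha>"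
    and I: "Inv V E l C r f ys"
  shows "\<exists>f' ys'. Inv V E l C (Suc r) f' ys'"
proof -
  have ys: "ys \<in> C" and fy: "\<forall>j\<in>{1..l}. f (r-1) j = ys!pos (r-1) j \<and> f r j = ys!pos r j"
    and c: "cyl V E r l f" using I unfolding Inv_def by auto
  define F where "F = (\<lambda>(i, j). f i j) ` ({1..r} \<times> {1..l})"
  have finF: "finite F" unfolding F_def by simp
  have "card F \<le> card ({1..r} \<times> {1..l})" unfolding F_def by (rule card_image_le) simp
  then have "card F \<le> r * l" by simp
  then have cF: "real (card F) < \<alpha>" using rl by (meson le_less_trans of_nat_le_iff)
  define P where "P = pos (Suc r) ` {1..l}"
  have Psub: "P \<subseteq> {..<2*l}" unfolding P_def using pos_lt by auto
  obtain zs where zs: "zs \<in> C" "\<forall>i. i \<notin> P \<longrightarrow> zs!i = ys!i" "\<forall>i\<in>P. zs!i \<notin> F"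
    using replace[OF rich finF cF _ ys Psub] unfolding P_def by blast
  have cy: "is_cycle V E l zs" using rich zs(1) unfolding rich_def by blast
  have len: "length zs = 2*l" and dist: "distinct zs" and sV: "set zs \<subseteq> V" using cy unfolding is_cycle_def by auto
  define g where "g = f(Suc r := (\<lambda>j. zs!pos (Suc r) j))"
  have notP: "j \<in> {1..l} \<Longrightarrow> pos r j \<notin> P" for j
  proof
    assume j: "j \<in> {1..l}" and "pos r j \<in> P"
    then obtain j' where j': "j' \<in> {1..l}" "pos r j = pos (Suc r) j'" unfolding P_def by auto
    then have "odd r \<longleftrightarrow> odd (Suc r)" using pos_inj[OF j j'(1)] by blast
    then show False by simp
  qed
  have gr: "j \<in> {1..l} \<Longrightarrow> g r j = zs!pos r j" for j
    using notP[of j] zs(2) fy unfolding g_def by simp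
  have gS: "g (Suc r) j = zs!pos (Suc r) j" for j unfolding g_def by simp
  have gF: "j \<in> {1..l} \<Longrightarrow> g (Suc r) j \<notin> F" for j using zs(3) unfolding P_def gS by blast
  have glow: "i \<le> r \<Longrightarrow> g i = f i" for i unfolding g_def by simp
  have cf: "inj_on (\<lambda>(i, j). f i j) ({1..r} \<times> {1..l})"
    "\<forall>i \<in> {1..r}. \<forall>j \<in> {1..l}. f i j \<in> V"
    "\<forall>i \<in> {1..r-1}. \<forall>j \<in> {1..l}. E (f i j) (f (i + 1) j)"
    "\<forall>i \<in> {1..r-1}. odd i \<longrightarrow> (\<forall>j \<in> {1..l}. E (f i (cyc_succ l j)) (f (i + 1) j))"
    "\<forall>i \<in> {1..r-1}. even i \<longrightarrow> (\<forall>j \<in> {1..l}. E (f i j) (f (i + 1) (cyc_succ l j)))"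
    using c unfolding cyl_def by auto
  have inj: "inj_on (\<lambda>(i, j). g i j) ({1..Suc r} \<times> {1..l})"
  proof (rule inj_onI, clarify)
    fix i j i' j' assume h: "i \<in> {1..Suc r}" "j \<in> {1..l}" "i' \<in> {1..Suc r}" "j' \<in> {1..l}" "g i j = g i' j'"
    show "i = i' \<and> j = j'"
    proof (cases "i = Suc r")
      case True
      show ?thesis
      proof (cases "i' = Suc r")
        case True
        have "pos (Suc r) j = pos (Suc r) j'"
          using h \<open>i = Suc r\<close> True gS pos_lt[of j l] pos_lt[of j' l] nth_eq_iff_index_eq[OF dist] len by auto
        then show ?thesis using pos_inj h \<open>i = Suc r\<close> True by blast
      next
        case False
        then have "g i' j' \<in> F" using h glow[of i'] unfolding F_def by auto
        then show ?thesis using gF[OF h(2)] h(5) True by simp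
      qed
    next
      case False
      show ?thesis
      proof (cases "i' = Suc r")
        case True
        have "i \<le> r" using h(1) False by auto
        then have "(i, j) \<in> {1..r} \<times> {1..l}" using h by auto
        then have "f i j \<in> F" unfolding F_def by force
        then have "g i j \<in> F" using glow[OF \<open>i \<le> r\<close>] by simp
        then show ?thesis using gF[OF h(4)] h(5) True by simp
      next
        case False2: False
        have "f i j = f i' j'" using h False False2 glow[of i] glow[of i'] by auto
        moreover have "(i, j) \<in> {1..r} \<times> {1..l}" "(i', j') \<in> {1..r} \<times> {1..l}" using h False False2 by auto
        ultimately have "(i, j) = (i', j')" using inj_onD[OF cf(1)] by fastforce
        then show ?thesis by simp
      qed
    qed
  qed
  have V: "\<forall>i \<in> {1..Suc r}. \<forall>j \<in> {1..l}. g i j \<in> V"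
  proof (intro ballI)
    fix i j assume h: "i \<in> {1..Suc r}" "j \<in> {1..l}"
    show "g i j \<in> V"
    proof (cases "i = Suc r")
      case True
      have "zs ! pos (Suc r) j \<in> set zs" using pos_lt[OF h(2)] len by simp
      then show ?thesis using gS True sV by auto
    next
      case False then show ?thesis using h cf(2) glow[of i] by auto
    qed
  qed
  have ab: "\<forall>j\<in>{1..l}. g r j = zs!pos r j \<and> g (Suc r) j = zs!pos (Suc r) j" using gr gS by simp
  note pe = pair_edges[OF cy g ab]
  have e1: "\<forall>i \<in> {1..Suc r-1}. \<forall>j \<in> {1..l}. E (g i j) (g (i + 1) j)"
  proof (intro ballI)
    fix i j assume h: "i \<in> {1..Suc r-1}" "j \<in> {1..l}"
    show "E (g i j) (g (i + 1) j)"
    proof (cases "i = r")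
      case True then show ?thesis using pe(1) h by simp
    next
      case False then show ?thesis using h cf(3) glow[of i] glow[of "i+1"] by auto
    qed
  qed
  have e2: "\<forall>i \<in> {1..Suc r-1}. odd i \<longrightarrow> (\<forall>j \<in> {1..l}. E (g i (cyc_succ l j)) (g (i + 1) j))"
  proof (intro ballI impI)
    fix i j assume h: "i \<in> {1..Suc r-1}" "odd i" "j \<in> {1..l}"
    show "E (g i (cyc_succ l j)) (g (i + 1) j)"
    proof (cases "i = r")
      case True then show ?thesis using pe(2) h by simp
    next
      case False then show ?thesis using h cf(4) glow[of i] glow[of "i+1"] by auto
    qed
  qed
  have e3: "\<forall>i \<in> {1..Suc r-1}. even i \<longrightarrow> (\<forall>j \<in> {1..l}. E (g i j) (g (i + 1) (cyc_succ l j)))"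
  proof (intro ballI impI)
    fix i j assume h: "i \<in> {1..Suc r-1}" "even i" "j \<in> {1..l}"
    show "E (g i j) (g (i + 1) (cyc_succ l j))"
    proof (cases "i = r")
      case True then show ?thesis using pe(3) h by simp
    next
      case False then show ?thesis using h cf(5) glow[of i] glow[of "i+1"] by auto
    qed
  qed
  have "cyl V E (Suc r) l g" unfolding cyl_def using inj V e1 e2 e3 by blast
  then have "Inv V E l C (Suc r) g zs" unfolding Inv_def using zs(1) ab by simp
  then show ?thesis by blast
qed

theorem proposition3p4:
  fixes V :: "'a set" and E :: "'a \<Rightarrow> 'a \<Rightarrow> bool" and k l :: nat and \<alpha> :: real
    and C :: "'a list set"
  assumes "simple_graph V E"
    and "k \<ge> 2" and "l \<ge> 2" and "\<alpha> > 0"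
    and "C \<noteq> {}" and "rich V E l \<alpha> C"
    and "\<alpha> \<ge> real (k * l)"
  shows "has_cylinder V E k l"
proof -
  obtain xs where xs: "xs \<in> C" using assms(5) by blast
  have "r \<le> k \<Longrightarrow> \<exists>f ys. Inv V E l C r f ys" if "2 \<le> r" for r
    using that
  proof (induction r rule: dec_induct)
    case base
    then show ?case using base_inv[OF assms(1) assms(6) xs] by blast
  next
    case (step n)
    then obtain f ys where I: "Inv V E l C n f ys" by auto
    have "n * l < k * l" using step.prems step.hyps assms(3) by simp
    then have "real (n * l) < \<alpha>" using assms(7) by (meson less_le_trans of_nat_less_iff)
    then show ?case using step_inv[OF assms(1) assms(6) step.hyps(1) _ I] by blast
  qed
  then obtain f ys where "Inv V E l C k f ys" using assms(2) by blast
  then show ?thesis unfolding has_cyl_iff Inv_def by blast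
qed

end
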